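(* Let $E$ be an arbitrary graph and consider the groupoid $\mathcal{G}_E$ with cocycle $\widetilde{w}:\mathcal{G}_E\to\mathbb{Z}$, $\widetilde{w}(x,k,y)=k$. Then $\widetilde{w}$ is star injective if and only if $|r_E^{-1}(v)|\le1$ for every $v\in E^0$ (i.e. every vertex receives at most one edge).
   Context: Graph $E=(E^0,E^1,r_E,s_E)$; paths, $E^*$ (finite paths, including vertices), $E^\infty$ (infinite paths); $|\alpha|$ is the length of a path. A vertex is regular if it emits a finite nonzero number of edges. $X=E^\infty\cup\{\mu\in E^*: r(\mu)\text{ is not regular}\}$. $\mathcal{G}_E=\{(\alpha x,|\alpha|-|\beta|,\beta x):\alpha,\beta\in E^*,\ x\in X,\ r(\alpha)=r(\beta)=s(x)\}$, with $(x,k,y)$ a morphism from $y$ (domain) to $x$ (range), composition $(x,k,y)(y,l,z)=(x,k+l,z)$, inverse $(x,k,y)^{-1}=(y,-k,x)$, and unit space identified with $X$. Viewing $\mathbb{Z}$ as a one-object category, a functor $F:\mathcal{C}\to\mathcal{D}$ is star injective if for each object $x$ its restriction to $\operatorname{Star}(x)=\{\text{morphisms with domain }x\}$ is injective; here $\operatorname{Star}(x)=\{(y,k,x)\in\mathcal{G}_E\}$. *)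

theory Defs
  imports Main
begin

text \<open>A finite path is a pair (v, es): a vertex v (length 0) or a list of edges es = e1...en
  with r(e_i) = s(e_(i+1)) and v = s(e1).\<close>

definition graph :: "'v set \<Rightarrow> 'e set \<Rightarrow> ('e \<Rightarrow> 'v) \<Rightarrow> ('e \<Rightarrow> 'v) \<Rightarrow> bool" where
  "graph E0 E1 r s \<longleftrightarrow> (\<forall>e\<in>E1. r e \<in> E0 \<and> s e \<in> E0)"

definition regular_vertex :: "'e set \<Rightarrow> ('e \<Rightarrow> 'v) \<Rightarrow> 'v \<Rightarrow> bool" where
  "regular_vertex E1 s v \<longleftrightarrow> finite {e\<in>E1. s e = v} \<and> {e\<in>E1. s e = v} \<noteq> {}"

definition finite_path :: "'v set \<Rightarrow> 'e set \<Rightarrow> ('e \<Rightarrow> 'v) \<Rightarrow> ('e \<Rightarrow> 'v) \<Rightarrow> 'v \<times> 'e list \<Rightarrow> bool" where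
  "finite_path E0 E1 r s p \<longleftrightarrow> (case p of (v, es) \<Rightarrow>
     v \<in> E0 \<and> set es \<subseteq> E1 \<and> (es \<noteq> [] \<longrightarrow> s (hd es) = v) \<and>
     (\<forall>i. Suc i < length es \<longrightarrow> r (es ! i) = s (es ! Suc i)))"

definition path_range :: "('e \<Rightarrow> 'v) \<Rightarrow> 'v \<times> 'e list \<Rightarrow> 'v" where
  "path_range r p = (case p of (v, es) \<Rightarrow> if es = [] then v else r (last es))"

definition path_len :: "'v \<times> 'e list \<Rightarrow> nat" where
  "path_len p = length (snd p)"

definition infinite_path :: "'e set \<Rightarrow> ('e \<Rightarrow> 'v) \<Rightarrow> ('e \<Rightarrow> 'v) \<Rightarrow> (nat \<Rightarrow> 'e) \<Rightarrow> bool" where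
  "infinite_path E1 r s f \<longleftrightarrow> (\<forall>n. f n \<in> E1 \<and> r (f n) = s (f (Suc n)))"

datatype ('v, 'e) bpath = FinP 'v "'e list" | InfP "nat \<Rightarrow> 'e"

fun bpath_src :: "('e \<Rightarrow> 'v) \<Rightarrow> ('v, 'e) bpath \<Rightarrow> 'v" where
  "bpath_src s (FinP v es) = v"
| "bpath_src s (InfP f) = s (f 0)"

definition boundary_paths :: "'v set \<Rightarrow> 'e set \<Rightarrow> ('e \<Rightarrow> 'v) \<Rightarrow> ('e \<Rightarrow> 'v) \<Rightarrow> ('v, 'e) bpath set" where
  "boundary_paths E0 E1 r s =
     {InfP f | f. infinite_path E1 r s f} \<union>
     {FinP v es | v es. finite_path E0 E1 r s (v, es) \<and> \<not> regular_vertex E1 s (path_range r (v, es))}"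

fun concat_path :: "'v \<times> 'e list \<Rightarrow> ('v, 'e) bpath \<Rightarrow> ('v, 'e) bpath" where
  "concat_path (v, es) (FinP w fs) = FinP v (es @ fs)"
| "concat_path (v, es) (InfP f) = InfP (\<lambda>n. if n < length es then es ! n else f (n - length es))"

text \<open>The groupoid G_E as a set of triples (range, k, domain).\<close>
definition graph_groupoid :: "'v set \<Rightarrow> 'e set \<Rightarrow> ('e \<Rightarrow> 'v) \<Rightarrow> ('e \<Rightarrow> 'v)
    \<Rightarrow> (('v, 'e) bpath \<times> int \<times> ('v, 'e) bpath) set" where
  "graph_groupoid E0 E1 r s =
     {(concat_path \<alpha> x, int (path_len \<alpha>) - int (path_len \<beta>), concat_path \<beta> x) | \<alpha> \<beta> x.
        finite_path E0 E1 r s \<alpha> \<and> finite_path E0 E1 r s \<beta> \<and> x \<in> boundary_paths E0 E1 r s \<and>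
        path_range r \<alpha> = bpath_src s x \<and> path_range r \<beta> = bpath_src s x}"

definition star :: "('a \<times> int \<times> 'a) set \<Rightarrow> 'a \<Rightarrow> ('a \<times> int \<times> 'a) set" where
  "star G x = {g \<in> G. snd (snd g) = x}"

definition star_injective :: "('a \<times> int \<times> 'a) set \<Rightarrow> 'a set \<Rightarrow> ('a \<times> int \<times> 'a \<Rightarrow> int) \<Rightarrow> bool" where
  "star_injective G Obj F \<longleftrightarrow> (\<forall>x\<in>Obj. inj_on F (star G x))"

definition cocycle_w :: "'a \<times> int \<times> 'a \<Rightarrow> int" where
  "cocycle_w g = fst (snd g)"

end

theory Submission
  imports Defs
begin

lemma fp_snoc:
  assumes "finite_path E0 E1 r s (a, as @ [e])"
  shows "finite_path E0 E1 r s (a, as) \<and> path_range r (a, as) = s e \<and> e \<in> E1"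
proof -
  from assms have A: "a \<in> E0" "set as \<subseteq> E1" "e \<in> E1"
    and H: "s (hd (as @ [e])) = a"
    and C: "\<forall>i. Suc i < length as + 1 \<longrightarrow> r ((as@[e]) ! i) = s ((as@[e]) ! Suc i)"
    unfolding finite_path_def by auto
  have "finite_path E0 E1 r s (a, as)"
    unfolding finite_path_def
  proof (simp add: A, intro conjI impI allI)
    assume "as \<noteq> []" thus "s (hd as) = a" using H by simp
  next
    fix i assume "Suc i < length as"
    thus "r (as ! i) = s (as ! Suc i)" using C[rule_format, of i]
      by (simp add: nth_append)
  qed
  moreover have "path_range r (a, as) = s e"
  proof (cases "as = []")
    case True thus ?thesis using H by (simp add: path_range_def)
  next
    case False
    then have "r (as ! (length as - 1)) = s ((as@[e]) ! length as)"
      using C[rule_format, of "length as - 1"] by (simp add: nth_append)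
    thus ?thesis using False by (simp add: path_range_def last_conv_nth)
  qed
  ultimately show ?thesis using A by simp
qed

lemma uniq_back:
  assumes inj: "\<forall>e\<in>E1. \<forall>f\<in>E1. r e = r f \<longrightarrow> e = f"
  shows "finite_path E0 E1 r s (a, as) \<Longrightarrow> finite_path E0 E1 r s (a', as') \<Longrightarrow>
    length as = length as' \<Longrightarrow> path_range r (a, as) = path_range r (a', as') \<Longrightarrow>
    a = a' \<and> as = as'"
proof (induction as arbitrary: as' rule: rev_induct)
  case Nil
  thus ?case by (simp add: path_range_def)
next
  case (snoc e as)
  then obtain as0 e' where as': "as' = as0 @ [e']"
    by (metis length_0_conv rev_exhaust snoc_eq_iff_butlast)
  note P1 = fp_snoc[OF snoc.prems(1)]
  note P2 = fp_snoc[OF snoc.prems(2)[unfolded as']]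
  have "r e = r e'" using snoc.prems(4) as' by (simp add: path_range_def)
  hence "e = e'" using inj P1 P2 by blast
  moreover have "a = a' \<and> as = as0"
    using snoc.IH[of as0] P1 P2 snoc.prems(3) as' \<open>e = e'\<close> by simp
  ultimately show ?case using as' by simp
qed

lemma fp_append:
  assumes "finite_path E0 E1 r s (a, as)" "finite_path E0 E1 r s (w, fs)"
    "path_range r (a, as) = w"
  shows "finite_path E0 E1 r s (a, as @ fs)"
proof -
  from assms have A: "a \<in> E0" "set as \<subseteq> E1" "set fs \<subseteq> E1"
    and H1: "as \<noteq> [] \<longrightarrow> s (hd as) = a" and H2: "fs \<noteq> [] \<longrightarrow> s (hd fs) = w"
    and C1: "\<forall>i. Suc i < length as \<longrightarrow> r (as ! i) = s (as ! Suc i)"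
    and C2: "\<forall>i. Suc i < length fs \<longrightarrow> r (fs ! i) = s (fs ! Suc i)"
    and R: "(if as = [] then a else r (last as)) = w"
    unfolding finite_path_def path_range_def by auto
  show ?thesis unfolding finite_path_def
  proof (simp only: prod.case, intro conjI impI allI)
    show "a \<in> E0" "set (as @ fs) \<subseteq> E1" using A by auto
  next
    assume "as @ fs \<noteq> []"
    thus "s (hd (as @ fs)) = a" using H1 H2 R by (cases "as = []") auto
  next
    fix i assume i: "Suc i < length (as @ fs)"
    hence i: "Suc i < length as + length fs" by simp
    consider "Suc i < length as" | "Suc i = length as" | "length as \<le> i" by linarith
    thus "r ((as @ fs) ! i) = s ((as @ fs) ! Suc i)"
    proof cases
      case 1 thus ?thesis using C1 by (simp add: nth_append)
    next
      case 2
      hence "as \<noteq> []" "fs \<noteq> []" using i by auto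
      moreover have "i = length as - 1" using 2 by simp
      ultimately have "r (as ! i) = w" "s (fs ! 0) = w" using R H2
        by (auto simp: last_conv_nth hd_conv_nth)
      thus ?thesis using 2 by (simp add: nth_append)
    next
      case 3
      hence "Suc (i - length as) < length fs" using i by linarith
      hence "r (fs ! (i - length as)) = s (fs ! Suc (i - length as))" using C2 by blast
      moreover have "Suc i - length as = Suc (i - length as)" using 3 by linarith
      ultimately show ?thesis using 3 by (simp add: nth_append)
    qed
  qed
qed

lemma pr_append:
  "path_range r (a, as) = path_range r (b, bs) \<Longrightarrow>
   path_range r (a, as @ fs) = path_range r (b, bs @ fs)"
  by (cases fs) (auto simp: path_range_def split: if_splits)

lemma key:
  assumes inj: "\<forall>e\<in>E1. \<forall>f\<in>E1. r e = r f \<longrightarrow> e = f"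
    and "finite_path E0 E1 r s (a, as)" "finite_path E0 E1 r s (b, bs)"
    "finite_path E0 E1 r s (w, fs)"
    "finite_path E0 E1 r s (a', as')" "finite_path E0 E1 r s (b, bs')"
    "finite_path E0 E1 r s (w', fs')"
    "path_range r (a, as) = w" "path_range r (b, bs) = w"
    "path_range r (a', as') = w'" "path_range r (b, bs') = w'"
    "bs @ fs = bs' @ fs'"
    "int (length as) - int (length bs) = int (length as') - int (length bs')"
  shows "a = a' \<and> as @ fs = as' @ fs'"
proof -
  have "length (bs @ fs) = length (bs' @ fs')" using assms(12) by simp
  hence L: "length (as @ fs) = length (as' @ fs')" using assms(13) by simp
  have "path_range r (a, as @ fs) = path_range r (b, bs @ fs)"
    using pr_append assms by metis
  moreover have "path_range r (a', as' @ fs') = path_range r (b, bs' @ fs')"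
    using pr_append assms by metis
  ultimately have "path_range r (a, as @ fs) = path_range r (a', as' @ fs')"
    using assms(12) by simp
  thus ?thesis using uniq_back[OF inj fp_append[OF assms(2,4,8)] fp_append[OF assms(5,7,10)] L]
    by simp
qed

lemma nth_pref:
  "j < length bs + M \<Longrightarrow>
   (if j < length bs then bs ! j else f (j - length bs)) = (bs @ map f [0..<M]) ! j"
  by (simp add: nth_append)

lemma fp_src:
  assumes "finite_path E0 E1 r s (b, bs)" "finite_path E0 E1 r s (w, fs)"
    "path_range r (b, bs) = w" "bs @ fs \<noteq> []"
  shows "b = s (hd (bs @ fs))"
  using assms by (cases bs) (auto simp: finite_path_def path_range_def)

lemma inf_fp:
  assumes "graph E0 E1 r s" "infinite_path E1 r s f"
  shows "finite_path E0 E1 r s (s (f 0), map f [0..<M])"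
  using assms unfolding finite_path_def infinite_path_def graph_def
  by (auto simp: hd_map nth_append simp del: upt_Suc)

lemma inf_pr:
  assumes "infinite_path E1 r s f"
  shows "path_range r (a, as) = s (f 0) \<Longrightarrow> path_range r (a, as) = s (f 0)" by simp

lemma main_eq:
  assumes g: "graph E0 E1 r s"
    and inj: "\<forall>e\<in>E1. \<forall>f\<in>E1. r e = r f \<longrightarrow> e = f"
    and fa: "finite_path E0 E1 r s (a, as)" and fb: "finite_path E0 E1 r s (b, bs)"
    and fa': "finite_path E0 E1 r s (a', as')" and fb': "finite_path E0 E1 r s (b', bs')"
    and z: "z \<in> boundary_paths E0 E1 r s" and z': "z' \<in> boundary_paths E0 E1 r s"
    and ra: "path_range r (a, as) = bpath_src s z" and rb: "path_range r (b, bs) = bpath_src s z"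
    and ra': "path_range r (a', as') = bpath_src s z'" and rb': "path_range r (b', bs') = bpath_src s z'"
    and eq: "concat_path (b, bs) z = concat_path (b', bs') z'"
    and k: "int (length as) - int (length bs) = int (length as') - int (length bs')"
  shows "concat_path (a, as) z = concat_path (a', as') z'"
proof (cases z)
  case (FinP w fs)
  then obtain w' fs' where z'F: "z' = FinP w' fs'" using eq by (cases z') auto
  have fz: "finite_path E0 E1 r s (w, fs)" using z FinP by (auto simp: boundary_paths_def)
  have fz': "finite_path E0 E1 r s (w', fs')" using z' z'F by (auto simp: boundary_paths_def)
  have bb: "b' = b" and L: "bs @ fs = bs' @ fs'" using eq FinP z'F by auto
  show ?thesis
    using key[OF inj fa fb fz fa' fb'[unfolded bb] fz'] ra rb ra' rb' L k FinP z'F bb by simp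
next
  case (InfP f)
  then obtain f' where z'I: "z' = InfP f'" using eq by (cases z') auto
  have if1: "infinite_path E1 r s f" using z InfP by (auto simp: boundary_paths_def)
  have if2: "infinite_path E1 r s f'" using z' z'I by (auto simp: boundary_paths_def)
  have FE: "(\<lambda>n. if n < length bs then bs ! n else f (n - length bs)) =
            (\<lambda>n. if n < length bs' then bs' ! n else f' (n - length bs'))"
    using eq InfP z'I by simp
  have "(if n < length as then as ! n else f (n - length as)) =
        (if n < length as' then as' ! n else f' (n - length as'))" for n
  proof -
    define M where "M = n + 1 + length bs'"
    define M' where "M' = n + 1 + length bs"
    have L: "bs @ map f [0..<M] = bs' @ map f' [0..<M']"
    proof (rule nth_equalityI)
      show "length (bs @ map f [0..<M]) = length (bs' @ map f' [0..<M'])"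
        by (simp add: M_def M'_def)
      fix j assume "j < length (bs @ map f [0..<M])"
      hence j1: "j < length bs + M" and j2: "j < length bs' + M'" by (auto simp: M_def M'_def)
      show "(bs @ map f [0..<M]) ! j = (bs' @ map f' [0..<M']) ! j"
        using nth_pref[OF j1, of f] nth_pref[OF j2, of f'] fun_cong[OF FE, of j] by simp
    qed
    have p1: "finite_path E0 E1 r s (s (f 0), map f [0..<M])" by (rule inf_fp[OF g if1])
    have p2: "finite_path E0 E1 r s (s (f' 0), map f' [0..<M'])" by (rule inf_fp[OF g if2])
    have ne: "bs @ map f [0..<M] \<noteq> []" by (simp add: M_def)
    have "b = s (hd (bs @ map f [0..<M]))"
      using fp_src[OF fb p1] rb InfP ne by simp
    moreover have "b' = s (hd (bs' @ map f' [0..<M']))"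
      using fp_src[OF fb' p2] rb' z'I ne L by simp
    ultimately have bb: "b' = b" using L by simp
    have "a = a' \<and> as @ map f [0..<M] = as' @ map f' [0..<M']"
      using key[OF inj fa fb p1 fa' fb'[unfolded bb] p2] ra rb ra' rb' L k InfP z'I bb by simp
    hence "(as @ map f [0..<M]) ! n = (as' @ map f' [0..<M']) ! n" by simp
    moreover have "n < length as + M" "n < length as' + M'" by (auto simp: M_def M'_def)
    ultimately show ?thesis using nth_pref[of n as M f] nth_pref[of n as' M' f'] by simp
  qed
  thus ?thesis using InfP z'I by auto
qed


lemma exists_bpath:
  assumes g: "graph E0 E1 r s" and v: "v \<in> E0"
  shows "\<exists>x\<in>boundary_paths E0 E1 r s. bpath_src s x = v"
proof -
  define nx where "nx u = (SOME e. e \<in> E1 \<and> s e = u)" for u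
  define u where "u = rec_nat v (\<lambda>_ w. r (nx w))"
  have u0: "u 0 = v" and uS: "u (Suc n) = r (nx (u n))" for n by (simp_all add: u_def)
  have nxr: "nx w \<in> E1 \<and> s (nx w) = w" if "regular_vertex E1 s w" for w
  proof -
    from that obtain e where "e \<in> E1" "s e = w" unfolding regular_vertex_def by auto
    thus ?thesis unfolding nx_def by (metis (mono_tags, lifting) someI)
  qed
  show ?thesis
  proof (cases "\<forall>n. regular_vertex E1 s (u n)")
    case True
    have "infinite_path E1 r s (\<lambda>n. nx (u n))"
      unfolding infinite_path_def using nxr True uS by metis
    hence "InfP (\<lambda>n. nx (u n)) \<in> boundary_paths E0 E1 r s"
      unfolding boundary_paths_def by blast
    moreover have "bpath_src s (InfP (\<lambda>n. nx (u n))) = v" using nxr True u0 by (metis bpath_src.simps(2))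
    ultimately show ?thesis by blast
  next
    case False
    define N where "N = (LEAST n. \<not> regular_vertex E1 s (u n))"
    have nN: "\<not> regular_vertex E1 s (u N)" unfolding N_def using False by (metis (mono_tags, lifting) LeastI)
    have rb: "regular_vertex E1 s (u i)" if "i < N" for i
      using not_less_Least[OF that[unfolded N_def]] by blast
    define es where "es = map (\<lambda>i. nx (u i)) [0..<N]"
    have fp: "finite_path E0 E1 r s (v, es)"
      unfolding finite_path_def es_def
    proof (simp only: prod.case, intro conjI impI allI)
      show "v \<in> E0" by (rule v)
      show "set (map (\<lambda>i. nx (u i)) [0..<N]) \<subseteq> E1" using nxr rb by auto
    next
      assume "map (\<lambda>i. nx (u i)) [0..<N] \<noteq> []"
      hence "0 < N" by simp
      thus "s (hd (map (\<lambda>i. nx (u i)) [0..<N])) = v"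
        using nxr[OF rb[OF \<open>0 < N\<close>]] u0 by (simp add: hd_map)
    next
      fix i assume "Suc i < length (map (\<lambda>i. nx (u i)) [0..<N])"
      hence "Suc i < N" by simp
      thus "r (map (\<lambda>i. nx (u i)) [0..<N] ! i) = s (map (\<lambda>i. nx (u i)) [0..<N] ! Suc i)"
        using nxr[OF rb[OF \<open>Suc i < N\<close>]] uS[of i] by simp
    qed
    have pr: "path_range r (v, es) = u N"
    proof (cases N)
      case 0 thus ?thesis by (simp add: path_range_def es_def u0)
    next
      case (Suc m) thus ?thesis by (simp add: path_range_def es_def uS)
    qed
    have "FinP v es \<in> boundary_paths E0 E1 r s"
      unfolding boundary_paths_def using fp pr nN by auto
    thus ?thesis by force
  qed
qed

theorem mainTheorem16:
  fixes E0 :: "'v set" and E1 :: "'e set" and r s :: "'e \<Rightarrow> 'v"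
  assumes "graph E0 E1 r s"
  shows "star_injective (graph_groupoid E0 E1 r s) (boundary_paths E0 E1 r s) cocycle_w
     \<longleftrightarrow> (\<forall>v\<in>E0. \<forall>e\<in>E1. \<forall>f\<in>E1. r e = v \<and> r f = v \<longrightarrow> e = f)"
proof
  assume SI: "star_injective (graph_groupoid E0 E1 r s) (boundary_paths E0 E1 r s) cocycle_w"
  show "\<forall>v\<in>E0. \<forall>e\<in>E1. \<forall>f\<in>E1. r e = v \<and> r f = v \<longrightarrow> e = f"
  proof (intro ballI impI, rule ccontr)
    fix v e f assume v: "v \<in> E0" and e: "e \<in> E1" and f: "f \<in> E1"
      and ref: "r e = v \<and> r f = v" and ne: "e \<noteq> f"
    obtain x where x: "x \<in> boundary_paths E0 E1 r s" and sx: "bpath_src s x = v"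
      using exists_bpath[OF assms v] by blast
    have fe: "finite_path E0 E1 r s (s e, [e])" using e assms
      by (auto simp: finite_path_def graph_def)
    have ff: "finite_path E0 E1 r s (s f, [f])" using f assms
      by (auto simp: finite_path_def graph_def)
    have fv: "finite_path E0 E1 r s (v, [])" using v by (simp add: finite_path_def)
    have cx: "concat_path (v, []) x = x" using sx by (cases x) auto
    have ge: "(concat_path (s e, [e]) x, 1, x) \<in> graph_groupoid E0 E1 r s"
      unfolding graph_groupoid_def
      apply (rule CollectI, rule exI[of _ "(s e, [e])"], rule exI[of _ "(v, [])"], rule exI[of _ x])
      using fe fv x ref sx cx by (simp add: path_len_def path_range_def)
    have gf: "(concat_path (s f, [f]) x, 1, x) \<in> graph_groupoid E0 E1 r s"
      unfolding graph_groupoid_def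
      apply (rule CollectI, rule exI[of _ "(s f, [f])"], rule exI[of _ "(v, [])"], rule exI[of _ x])
      using ff fv x ref sx cx by (simp add: path_len_def path_range_def)
    have "inj_on cocycle_w (star (graph_groupoid E0 E1 r s) x)"
      using SI x unfolding star_injective_def by blast
    moreover have "(concat_path (s e, [e]) x, 1, x) \<in> star (graph_groupoid E0 E1 r s) x"
      "(concat_path (s f, [f]) x, 1, x) \<in> star (graph_groupoid E0 E1 r s) x"
      using ge gf by (auto simp: star_def)
    ultimately have "concat_path (s e, [e]) x = concat_path (s f, [f]) x"
      unfolding inj_on_def cocycle_w_def by fastforce
    thus False using ne by (cases x) (auto dest: fun_cong[where x=0])
  qed
next
  assume R: "\<forall>v\<in>E0. \<forall>e\<in>E1. \<forall>f\<in>E1. r e = v \<and> r f = v \<longrightarrow> e = f"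
  have inj: "\<forall>e\<in>E1. \<forall>f\<in>E1. r e = r f \<longrightarrow> e = f"
    using R assms unfolding graph_def by metis
  show "star_injective (graph_groupoid E0 E1 r s) (boundary_paths E0 E1 r s) cocycle_w"
    unfolding star_injective_def inj_on_def
  proof (intro ballI impI)
    fix x g1 g2
    assume g1: "g1 \<in> star (graph_groupoid E0 E1 r s) x"
      and g2: "g2 \<in> star (graph_groupoid E0 E1 r s) x"
      and c: "cocycle_w g1 = cocycle_w g2"
    from g1 obtain a as b bs z where
      G1: "g1 = (concat_path (a, as) z, int (length as) - int (length bs), concat_path (b, bs) z)"
      and "finite_path E0 E1 r s (a, as)" "finite_path E0 E1 r s (b, bs)"
        "z \<in> boundary_paths E0 E1 r s" "path_range r (a, as) = bpath_src s z"
        "path_range r (b, bs) = bpath_src s z" "concat_path (b, bs) z = x"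
      unfolding star_def graph_groupoid_def path_len_def by auto
    note H1 = this
    from g2 obtain a' as' b' bs' z' where
      G2: "g2 = (concat_path (a', as') z', int (length as') - int (length bs'), concat_path (b', bs') z')"
      and "finite_path E0 E1 r s (a', as')" "finite_path E0 E1 r s (b', bs')"
        "z' \<in> boundary_paths E0 E1 r s" "path_range r (a', as') = bpath_src s z'"
        "path_range r (b', bs') = bpath_src s z'" "concat_path (b', bs') z' = x"
      unfolding star_def graph_groupoid_def path_len_def by auto
    note H2 = this
    have k: "int (length as) - int (length bs) = int (length as') - int (length bs')"
      using c G1 G2 by (simp add: cocycle_w_def)
    have "concat_path (a, as) z = concat_path (a', as') z'"
      using main_eq[OF assms inj H1(2,3) H2(2,3) H1(4) H2(4) H1(5,6) H2(5,6) _ k] H1(7) H2(7)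
      by simp
    thus "g1 = g2" using G1 G2 k H1(7) H2(7) by simp
  qed
qed

end
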